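(* Let $\Sigma$ be an alphabet with at least two letters and $f\colon\Sigma^*\to\Sigma^*$ RCP. If there exists $u\in\Sigma^*$ with $u\neq\varepsilon$ and $f(u)=\varepsilon$, then $f(x)=\varepsilon$ for all $x\in\Sigma^*$.
   Context: $\Sigma^*$ is the free monoid over $\Sigma$ (finite words, concatenation, empty word $\varepsilon$). A function $f\colon(\Sigma^* )^k\to\Sigma^*$ is RCP if for every monoid morphism $\varphi\colon\Sigma^*\to\Sigma^*$ and all $u_1,\ldots,u_k,v_1,\ldots,v_k$ with $\varphi(u_i)=\varphi(v_i)$ for all $i$, we have $\varphi(f(u_1,\ldots,u_k))=\varphi(f(v_1,\ldots,v_k))$. *)

theory Defs
  imports Main
begin

text \<open>Words over an alphabet S are lists with entries in S (the free monoid S*, with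
concatenation and the empty list as empty word).\<close>

definition monoid_morphism :: "'a set \<Rightarrow> ('a list \<Rightarrow> 'a list) \<Rightarrow> bool" where
  "monoid_morphism S \<phi> \<longleftrightarrow>
     (\<forall>u \<in> lists S. \<phi> u \<in> lists S) \<and>
     \<phi> [] = [] \<and>
     (\<forall>u \<in> lists S. \<forall>v \<in> lists S. \<phi> (u @ v) = \<phi> u @ \<phi> v)"

text \<open>RCP for a unary function f : S* \<rightarrow> S* (case k = 1).\<close>

definition RCP1 :: "'a set \<Rightarrow> ('a list \<Rightarrow> 'a list) \<Rightarrow> bool" where
  "RCP1 S f \<longleftrightarrow>
     (\<forall>\<phi>. monoid_morphism S \<phi> \<longrightarrow>
        (\<forall>u \<in> lists S. \<forall>v \<in> lists S. \<phi> u = \<phi> v \<longrightarrow> \<phi> (f u) = \<phi> (f v)))"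

end

theory Submission
  imports Defs
begin

lemma mm_concat: "(\<And>c. c \<in> S \<Longrightarrow> set (g c) \<subseteq> S) \<Longrightarrow> monoid_morphism S (\<lambda>w. concat (map g w))"
  unfolding monoid_morphism_def by (auto simp: lists_eq_set)

lemma mm_filter: "monoid_morphism S (filter P)"
  unfolding monoid_morphism_def by (auto simp: lists_eq_set)

lemma rcp_use: "RCP1 S f \<Longrightarrow> monoid_morphism S \<phi> \<Longrightarrow> u \<in> lists S \<Longrightarrow> v \<in> lists S
   \<Longrightarrow> \<phi> u = \<phi> v \<Longrightarrow> \<phi> (f u) = \<phi> (f v)"
  unfolding RCP1_def by blast

lemma crr: "concat (replicate m (replicate k x)) = replicate (m*k) x"
  by (induction m) (auto simp: replicate_add)

lemma two_elems: "finite S \<Longrightarrow> 2 \<le> card S \<Longrightarrow> \<exists>a b. a \<in> S \<and> b \<in> S \<and> a \<noteq> b"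
proof -
  assume "finite S" "2 \<le> card S"
  hence "\<not> card S \<le> Suc 0" by simp
  thus ?thesis using card_le_Suc0_iff_eq[OF \<open>finite S\<close>] by blast
qed

theorem mainTheorem7:
  fixes S :: "'a set" and f :: "'a list \<Rightarrow> 'a list"
  assumes "finite S" and "card S \<ge> 2"
    and "\<forall>x \<in> lists S. f x \<in> lists S"
    and "RCP1 S f"
    and "u \<in> lists S" and "u \<noteq> []" and "f u = []"
  shows "\<forall>x \<in> lists S. f x = []"
proof -
  obtain a b where ab: "a \<in> S" "b \<in> S" "a \<noteq> b"
    using two_elems[OF assms(1,2)] by blast
  have A: "f z = []" if z: "z \<in> lists S" "z0 \<in> lists S" "length z = length z0" "f z0 = []" for z z0
  proof -
    have mm: "monoid_morphism S (\<lambda>w. concat (map (\<lambda>_. [a]) w))"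
      by (rule mm_concat) (use ab in auto)
    have "concat (map (\<lambda>_. [a]) z) = concat (map (\<lambda>_. [a]) z0)"
      using z(3) by (simp add: map_replicate_const)
    from rcp_use[OF assms(4) mm z(1,2) this] z(4) show ?thesis by simp
  qed
  have pos: "f x = []" if x: "x \<in> lists S" "x \<noteq> []" for x
  proof -
    define L where "L = length x"
    define n where "n = length u"
    have L: "L \<ge> 1" using x L_def by (cases x) auto
    have n: "n \<ge> 1" using assms(6) n_def by (cases u) auto
    have fan: "f (replicate n a) = []"
      by (rule A[of _ u]) (use ab assms n_def in auto)
    define g where "g c = (if c = a then replicate L a else if c = b then replicate n a else [a])" for c
    have mm: "monoid_morphism S (\<lambda>w. concat (map g w))"
      by (rule mm_concat) (use ab in \<open>auto simp: g_def\<close>)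
    have ne: "g c \<noteq> []" for c using L n by (auto simp: g_def)
    have "concat (map g (replicate n a)) = replicate (n*L) a"
    proof -
      have "map g (replicate n a) = replicate n (replicate L a)" by (simp add: g_def)
      thus ?thesis by (simp only: crr)
    qed
    moreover have "concat (map g (replicate L b)) = replicate (L*n) a"
    proof -
      have "map g (replicate L b) = replicate L (replicate n a)" using ab by (simp add: g_def)
      thus ?thesis by (simp only: crr)
    qed
    ultimately have eq: "concat (map g (replicate n a)) = concat (map g (replicate L b))"
      by (simp add: mult.commute)
    have "concat (map g (f (replicate n a))) = concat (map g (f (replicate L b)))"
      by (rule rcp_use[OF assms(4) mm _ _ eq]) (use ab in auto)
    hence "concat (map g (f (replicate L b))) = []" using fan by simp
    hence "f (replicate L b) = []" using ne by (simp add: concat_eq_Nil_conv)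
    thus ?thesis using x ab by (intro A[of x "replicate L b"]) (auto simp: L_def)
  qed
  have zero: "f [] = []"
  proof -
    have fa: "f [a] = []" "f [b] = []" using pos ab by auto
    have "filter (\<lambda>c. c \<noteq> a) (f []) = filter (\<lambda>c. c \<noteq> a) (f [a])"
      by (rule rcp_use[OF assms(4) mm_filter]) (use ab in auto)
    hence 1: "\<forall>c\<in>set (f []). c = a" using fa by (simp add: filter_empty_conv)
    have "filter (\<lambda>c. c \<noteq> b) (f []) = filter (\<lambda>c. c \<noteq> b) (f [b])"
      by (rule rcp_use[OF assms(4) mm_filter]) (use ab in auto)
    hence 2: "\<forall>c\<in>set (f []). c = b" using fa by (simp add: filter_empty_conv)
    from 1 2 ab show ?thesis by (cases "f []") auto
  qed
  show ?thesis using pos zero by blast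
qed

end
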